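(* Let $k\ge 2$, $p\in(0,1)$, $q=1-p$. Then $M^{(k)}_1(p)=k-1$, and for all $n\ge 2$, $$M^{(k)}_n(p)=\frac1q\sum_{0<i<n} s^{(k)}_i\,(p^{k-1}q)^i\,M^{(k)}_{n-i}(p)\;+\;L^{(k)}_n(p),$$ where $$L^{(k)}_n(p)=(p^{k-1}q)^n\,\frac1q\sum_{j=k}^{(k-1)n} j\,d^{(k)}_{n,j}\,(1/p)^j,$$ and for $k\le j\le (k-1)n$, $$d^{(k)}_{n,j}=\binom{kn-2-j}{n-2}-\sum_{\ell=1}^{\,n-\lceil j/(k-1)\rceil} s^{(k)}_\ell\binom{k(n-\ell)-1-j}{n-\ell-1},$$ with $d^{(k)}_{n,j}=0$ for other $j$.
   Context: Matchbox process: fix integers $k\ge 2$, $n\ge 1$ and $p\in(0,1)$, $q=1-p$. Initially $k$ boxes each contain $n$ matches. At each time step, independently of the past, with probability $p$ a match is removed from a box currently containing the largest number of matches ("big-chooser"), and with probability $q$ a match is removed from a box currently containing the smallest number of matches ("little-chooser"); ties are broken arbitrarily (this does not affect the quantities below). The process is run until the first time some box is empty. The residue $X^{(k)}_n(p)$ is the total number of matches in the other $k-1$ boxes at that time, and $M^{(k)}_n(p)=\mathbb{E}[X^{(k)}_n(p)]$ is the expected residue. For $i\ge1$, $s^{(k)}_i=\frac{k-1}{ki-1}\binom{ki-1}{i-1}$. *)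

theory Defs
  imports "HOL-Probability.Probability"
begin

text \<open>Configuration of the k boxes: a list of length k of match counts.
  dec_first v xs removes one match from the first box holding exactly v matches
  (tie-breaking convention; irrelevant for the residue distribution).\<close>

fun dec_first :: "nat \<Rightarrow> nat list \<Rightarrow> nat list" where
  "dec_first v [] = []"
| "dec_first v (x # xs) = (if x = v then (x - 1) # xs else x # dec_first v xs)"

definition take_big :: "nat list \<Rightarrow> nat list" where
  "take_big xs = dec_first (Max (set xs)) xs"

definition take_little :: "nat list \<Rightarrow> nat list" where
  "take_little xs = dec_first (Min (set xs)) xs"

lemma sum_list_dec_first:
  "v \<in> set xs \<Longrightarrow> 0 < v \<Longrightarrow> sum_list (dec_first v xs) < sum_list xs"
  by (induction xs) auto

text \<open>Distribution of the residue (total number of matches left when the first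
  box becomes empty), started from configuration xs.\<close>

function residue_dist :: "real \<Rightarrow> nat list \<Rightarrow> nat pmf" where
  "residue_dist p xs =
     (if xs = [] \<or> 0 \<in> set xs then return_pmf (sum_list xs)
      else (let A = residue_dist p (take_big xs); B = residue_dist p (take_little xs)
            in bind_pmf (bernoulli_pmf p) (\<lambda>b. if b then A else B)))"
  by auto
termination
proof (relation "Wellfounded.measure (\<lambda>(p, xs). sum_list xs)")
  show "wf (Wellfounded.measure (\<lambda>(p, xs). sum_list xs))" by simp
next
  fix p :: real and xs :: "nat list"
  assume h: "\<not> (xs = [] \<or> 0 \<in> set xs)"
  then have "Max (set xs) \<in> set xs" "Min (set xs) \<in> set xs" by auto
  moreover have "0 < Max (set xs)" "0 < Min (set xs)" using h calculation
    by (metis gr0I)+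
  ultimately show "((p, take_big xs), p, xs) \<in> Wellfounded.measure (\<lambda>(p, xs). sum_list xs)"
    and "((p, take_little xs), p, xs) \<in> Wellfounded.measure (\<lambda>(p, xs). sum_list xs)"
    by (auto simp: take_big_def take_little_def sum_list_dec_first)
qed

declare residue_dist.simps [simp del]

definition M :: "nat \<Rightarrow> nat \<Rightarrow> real \<Rightarrow> real" where
  "M k n p = measure_pmf.expectation (residue_dist p (replicate k n)) real"

definition s :: "nat \<Rightarrow> nat \<Rightarrow> real" where
  "s k i = (real k - 1) / (real k * real i - 1) * real ((k * i - 1) choose (i - 1))"

definition d :: "nat \<Rightarrow> nat \<Rightarrow> nat \<Rightarrow> real" where
  "d k n j = (if k \<le> j \<and> j \<le> (k - 1) * n then
      real ((k * n - 2 - j) choose (n - 2))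
      - (\<Sum>l = 1..n - nat \<lceil>real j / real (k - 1)\<rceil>.
           s k l * real ((k * (n - l) - 1 - j) choose (n - l - 1)))
    else 0)"

definition L :: "nat \<Rightarrow> nat \<Rightarrow> real \<Rightarrow> real" where
  "L k n p = (p ^ (k - 1) * (1 - p)) ^ n * (1 / (1 - p)) *
     (\<Sum>j = k..(k - 1) * n. real j * d k n j * (1 / p) ^ j)"

end

theory Submission
  imports Defs
begin


definition FF :: "nat \<Rightarrow> nat \<Rightarrow> nat \<Rightarrow> real" where
  "FF k h u = (if h = 0 \<and> u = 0 then 1 else real h / real (h + k*u) * real ((h + k*u) choose u))"

lemma FF_0 [simp]: "FF k h 0 = 1"
  by (simp add: FF_def)

lemma FF_h0 [simp]: "u > 0 \<Longrightarrow> FF k 0 u = 0"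
  by (simp add: FF_def)

lemma binom_aux: "real (n choose Suc v) * real (Suc v) = real (n choose v) * (real n - real v)"
proof (cases "v \<le> n")
  case True
  have "Suc v * (n choose Suc v) = n * ((n-1) choose v)"
    using times_binomial_minus1_eq[of "Suc v" n] by simp
  moreover have "(n - v) * (n choose v) = n * ((n-1) choose v)" by (rule binomial_absorb_comp)
  ultimately have "Suc v * (n choose Suc v) = (n - v) * (n choose v)" by simp
  then have "real (Suc v * (n choose Suc v)) = real ((n - v) * (n choose v))" by metis
  then show ?thesis using True by (simp add: of_nat_diff algebra_simps)
next
  case False
  then show ?thesis by (simp add: binomial_eq_0)
qed

lemma aux_field: fixes N w c h k x :: real assumes "N > 0" "w > 0"
  shows "c * (h * x + (h + k) * w) / (N * w) = h / N * (c * x / w) + (h + k) / N * c"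
  using assms by (simp add: field_simps)

lemma FF_rec:
  assumes k: "k \<ge> 1"
  shows "FF k (Suc h) (Suc v) = FF k h (Suc v) + FF k (h + k) v"
proof -
  define N where "N = h + k * Suc v"
  have N1: "Suc h + k * Suc v = Suc N" by (simp add: N_def)
  have N2: "h + k + k * v = N" by (simp add: N_def)
  have "N > 0" using k by (simp add: N_def)
  then have Npos: "real N > 0" by simp
  have "Suc v \<le> k * Suc v" using k mult_le_mono1[of 1 k "Suc v"] by simp
  then have "v < N" by (simp add: N_def)
  then have vN: "real v < real N" by simp
  define c where "c = real (N choose v)"
  have c1: "real (N choose Suc v) = c * (real N - real v) / real (Suc v)"
    using binom_aux[of N v] by (simp add: c_def field_simps)
  have c2: "real (Suc N choose Suc v) = c * (real N + 1) / real (Suc v)"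
    using c1 by (simp add: c_def field_simps)
  have e1: "FF k (Suc h) (Suc v) = real (Suc h) / real (Suc N) * real (Suc N choose Suc v)"
    unfolding FF_def N1 by (simp del: binomial_Suc_Suc)
  have e2: "FF k h (Suc v) = real h / real N * real (N choose Suc v)"
    by (simp add: FF_def N_def)
  have e3: "FF k (h + k) v = real (h + k) / real N * c"
    using k by (simp add: FF_def N2 c_def)
  have kv: "real k * (real v + 1) = real N - real h" by (simp add: N_def algebra_simps)
  have vpos: "real v + 1 > 0" by simp
  have key: "(real h + 1) * real N = real h * (real N - real v) + (real h + real k) * (real v + 1)"
    using kv by (simp add: algebra_simps)
  have "real (Suc h) / real (Suc N) * (c * (real N + 1) / real (Suc v))
      = c * (real h + 1) / (real v + 1)"
  proof -
    have "real (Suc N) \<noteq> 0" "real (Suc v) \<noteq> 0" by simp_all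
    have "real (Suc h) / real (Suc N) * (c * (real N + 1) / real (Suc v))
       = (real (Suc h) * c / real (Suc v)) * ((real N + 1) / real (Suc N))" by (simp add: divide_inverse mult_ac)
    also have "(real N + 1) / real (Suc N) = 1" by simp
    finally show ?thesis by (simp add: algebra_simps)
  qed
  also have "... = c * ((real h + 1) * real N) / (real N * (real v + 1))"
    using Npos by simp
  also have "... = c * (real h * (real N - real v) + (real h + real k) * (real v + 1)) / (real N * (real v + 1))"
    by (simp only: key)
  also have "... = real h / real N * (c * (real N - real v) / (real v + 1)) + (real h + real k) / real N * c"
    by (rule aux_field[OF Npos vpos])
  also have "... = real h / real N * (c * (real N - real v) / real (Suc v)) + real (h + k) / real N * c"
    by simp
  finally show ?thesis unfolding e1 e2 e3 c1 c2 .
qed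

definition CC :: "nat \<Rightarrow> nat \<Rightarrow> nat \<Rightarrow> nat \<Rightarrow> real" where
  "CC k a h j = (if a = 0 then (if h = j then 1 else 0)
     else if j \<le> (k - 1) * a + h then real ((k * a + h - j - 1) choose (a - 1)) else 0)"

lemma CC_rec:
  assumes k: "k = Suc k'"
  shows "CC k (Suc a) (Suc h) j = CC k (Suc a) h j + CC k a (h + k) j"
proof (cases a)
  case 0
  then show ?thesis by (auto simp: CC_def k)
next
  case (Suc a')
  define X where "X = k' * a"
  have kx1: "k * Suc a = X + k' + Suc a" by (simp add: k X_def)
  have kx2: "k * a = X + a" by (simp add: k X_def)
  have kx3: "(k - 1) * Suc a = X + k'" by (simp add: k X_def)
  have kx4: "(k - 1) * a = X" by (simp add: k X_def)
  consider "j \<le> k' * Suc a + h" | "j = k' * Suc a + h + 1" | "j > k' * Suc a + h + 1" by linarith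
  then show ?thesis
  proof cases
    case 1
    then have 1: "j \<le> X + k' + h" by (simp add: X_def)
    define m where "m = X + k' + h - j + a"
    have e1: "k * Suc a + Suc h - j - 1 = Suc m" using 1 Suc unfolding kx1 m_def by arith
    have e2: "k * Suc a + h - j - 1 = m" using 1 Suc unfolding kx1 m_def by arith
    have e3: "k * a + (h + k) - j - 1 = m" using 1 Suc kx2 k unfolding m_def by arith
    have c3: "j \<le> (k - 1) * a + (h + k)" using 1 kx4 k by arith
    have c1: "j \<le> (k - 1) * Suc a + Suc h" "j \<le> (k - 1) * Suc a + h" using 1 unfolding kx3 by arith+
    show ?thesis using c1 c3 unfolding CC_def
      by (simp only: e1 e2 e3) (simp add: Suc)
  next
    case 2
    then have 2: "j = X + k' + h + 1" by (simp add: X_def)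
    have e1: "k * Suc a + Suc h - j - 1 = Suc a'" using 2 Suc unfolding kx1 by arith
    have e3: "k * a + (h + k) - j - 1 = a'" using 2 Suc kx2 k by arith
    have c3: "j \<le> (k - 1) * a + (h + k)" using 2 kx4 k by arith
    have c1: "j \<le> (k - 1) * Suc a + Suc h" "\<not> j \<le> (k - 1) * Suc a + h" using 2 unfolding kx3 by arith+
    show ?thesis using c1 c3 unfolding CC_def
      by (simp only: e1 e3) (simp add: Suc)
  next
    case 3
    then have 3: "j > X + k' + h + 1" by (simp add: X_def)
    have c: "\<not> j \<le> (k - 1) * a + (h + k)" "\<not> j \<le> (k - 1) * Suc a + Suc h" "\<not> j \<le> (k - 1) * Suc a + h"
      using 3 kx3 kx4 k by arith+
    then show ?thesis unfolding CC_def using Suc by simp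
  qed
qed


fun K :: "nat \<Rightarrow> nat \<Rightarrow> nat \<Rightarrow> nat \<Rightarrow> real" where
  "K k 0 h j = (if h = j then 1 else 0)"
| "K k (Suc a) 0 j = 0"
| "K k (Suc a) (Suc h) j = K k (Suc a) h j + K k a (h + k) j"

lemma K_decomp:
  "k = Suc k' \<Longrightarrow> K k a h j = CC k a h j - (\<Sum>u<a. FF k h u * CC k (a - u) 0 j)"
proof (induction k a h j rule: K.induct)
  case (1 k h j)
  then show ?case by (simp add: CC_def)
next
  case (2 k a j)
  have "(\<Sum>u<Suc a. FF k 0 u * CC k (Suc a - u) 0 j) = CC k (Suc a) 0 j"
    by (subst sum.lessThan_Suc_shift) simp
  then show ?case by simp
next
  case (3 kk a h j)
  have kk: "kk = Suc k'" by (rule 3(3))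
  have s1: "(\<Sum>u<Suc a. FF kk (Suc h) u * CC kk (Suc a - u) 0 j)
      = CC kk (Suc a) 0 j + (\<Sum>u<a. FF kk (Suc h) (Suc u) * CC kk (a - u) 0 j)"
    by (subst sum.lessThan_Suc_shift) simp
  have s2: "(\<Sum>u<Suc a. FF kk h u * CC kk (Suc a - u) 0 j)
      = CC kk (Suc a) 0 j + (\<Sum>u<a. FF kk h (Suc u) * CC kk (a - u) 0 j)"
    by (subst sum.lessThan_Suc_shift) simp
  have s3: "(\<Sum>u<a. FF kk (Suc h) (Suc u) * CC kk (a - u) 0 j)
      = (\<Sum>u<a. FF kk h (Suc u) * CC kk (a - u) 0 j) + (\<Sum>u<a. FF kk (h + kk) u * CC kk (a - u) 0 j)"
    using kk by (simp add: FF_rec sum.distrib algebra_simps)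
  show ?case using 3(1,2)[OF kk] CC_rec[OF kk, of a h j] s1 s2 s3 by simp
qed

lemma K_small: "1 \<le> a \<Longrightarrow> j < k \<Longrightarrow> K k a h j = 0"
proof (induction k a h j rule: K.induct)
  case (1 k h j)
  then show ?case by simp
next
  case (2 k a j)
  then show ?case by simp
next
  case (3 k a h j)
  then show ?case by (cases a) auto
qed

lemma K_big: "j > (k - 1) * a + h \<Longrightarrow> k \<ge> 1 \<Longrightarrow> K k a h j = 0"
proof (induction k a h j rule: K.induct)
  case (1 k h j)
  then show ?case by simp
next
  case (2 k a j)
  then show ?case by simp
next
  case (3 k a h j)
  have "j > (k - 1) * Suc a + h" using 3(3) by simp
  moreover have "j > (k - 1) * a + (h + k)" using 3(3,4) by (cases k) (auto simp: algebra_simps)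
  ultimately show ?case using 3 by simp
qed


fun fw :: "nat \<Rightarrow> real \<Rightarrow> nat \<Rightarrow> nat \<Rightarrow> real" where
  "fw k p 0 D = real D"
| "fw k p (Suc a) 0 = fw k p a (k - 1)"
| "fw k p (Suc a) (Suc D) = p * fw k p (Suc a) D + (1 - p) * fw k p a (D + k)"

definition SS :: "nat \<Rightarrow> real \<Rightarrow> nat \<Rightarrow> nat \<Rightarrow> real" where
  "SS k p a h = (\<Sum>j\<le>(k - 1) * a + h. real j * K k a h j * (1 / p) ^ j)"

definition EE :: "nat \<Rightarrow> real \<Rightarrow> nat \<Rightarrow> nat \<Rightarrow> real" where
  "EE k p a h = (1 - p) ^ a * p ^ ((k - 1) * a + h) * SS k p a h"

definition HH :: "nat \<Rightarrow> real \<Rightarrow> nat \<Rightarrow> nat \<Rightarrow> real" where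
  "HH k p a h = (\<Sum>u<a. FF k h u * p ^ (h + (k - 1) * u) * (1 - p) ^ u * fw k p (a - u) 0)"

lemma SS_ext:
  assumes "k \<ge> 1"
  shows "SS k p (Suc a) h = (\<Sum>j\<le>(k - 1) * Suc a + Suc h. real j * K k (Suc a) h j * (1 / p) ^ j)"
proof -
  have "K k (Suc a) h (Suc ((k - 1) * Suc a + h)) = 0" by (rule K_big) (use assms in simp_all)
  then show ?thesis unfolding SS_def by (simp del: K.simps)
qed

lemma lemmaA:
  "k = Suc k' \<Longrightarrow> p \<noteq> 0 \<Longrightarrow> fw k p a h = HH k p a h + EE k p a h"
proof (induction k p a h rule: fw.induct)
  case (1 k p D)
  have "SS k p 0 D = real D * (1 / p) ^ D"
  proof -
    have "SS k p 0 D = (\<Sum>j\<le>D. if j = D then real D * (1 / p) ^ D else 0)"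
      unfolding SS_def by (rule sum.cong) auto
    then show ?thesis by simp
  qed
  then show ?case using 1 by (simp add: EE_def HH_def power_one_over)
next
  case (2 k p a)
  have "SS k p (Suc a) 0 = 0" unfolding SS_def by simp
  moreover have "HH k p (Suc a) 0 = fw k p a (k - 1)"
    unfolding HH_def by (subst sum.lessThan_Suc_shift) simp
  ultimately show ?case by (simp add: EE_def)
next
  case (3 k p a D)
  have k: "k = Suc k'" and p: "p \<noteq> 0" by fact+
  define q where "q = 1 - p"
  have IH1: "fw k p (Suc a) D = HH k p (Suc a) D + EE k p (Suc a) D" using 3 by blast
  have IH2: "fw k p a (D + k) = HH k p a (D + k) + EE k p a (D + k)" using 3 by blast
  have pw: "p ^ (Suc D + k' * Suc u) = p * p ^ (D + k' * Suc u)"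
           "p ^ (Suc D + k' * Suc u) = p ^ (D + k + k' * u)" for u
    by (simp_all add: k algebra_simps)
  have H1: "HH k p (Suc a) (Suc D) = p ^ Suc D * fw k p (Suc a) 0
      + (\<Sum>u<a. FF k D (Suc u) * p ^ (Suc D + k' * Suc u) * q ^ Suc u * fw k p (a - u) 0)
      + (\<Sum>u<a. FF k (D + k) u * p ^ (Suc D + k' * Suc u) * q ^ Suc u * fw k p (a - u) 0)"
    unfolding HH_def q_def[symmetric]
    by (subst sum.lessThan_Suc_shift) (simp add: k FF_rec sum.distrib algebra_simps)
  have H2: "p * HH k p (Suc a) D = p ^ Suc D * fw k p (Suc a) 0
      + (\<Sum>u<a. FF k D (Suc u) * p ^ (Suc D + k' * Suc u) * q ^ Suc u * fw k p (a - u) 0)"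
    unfolding HH_def q_def[symmetric] pw(1)
    by (subst sum.lessThan_Suc_shift) (simp add: k sum_distrib_left algebra_simps)
  have H3: "q * HH k p a (D + k)
      = (\<Sum>u<a. FF k (D + k) u * p ^ (Suc D + k' * Suc u) * q ^ Suc u * fw k p (a - u) 0)"
    unfolding HH_def q_def[symmetric] pw(2)
    by (simp add: k sum_distrib_left algebra_simps)
  have HH: "HH k p (Suc a) (Suc D) = p * HH k p (Suc a) D + q * HH k p a (D + k)"
    using H1 H2 H3 by simp
  have S: "SS k p (Suc a) (Suc D) = SS k p (Suc a) D + SS k p a (D + k)"
  proof -
    define B where "B = (k - 1) * Suc a + Suc D"
    have b: "(k - 1) * a + (D + k) = B" by (simp add: k B_def)
    have "SS k p (Suc a) (Suc D) = (\<Sum>j\<le>B. real j * K k (Suc a) D j * (1 / p) ^ j + real j * K k a (D + k) j * (1 / p) ^ j)"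
      unfolding SS_def B_def by (rule sum.cong) (simp_all add: algebra_simps)
    also have "... = (\<Sum>j\<le>B. real j * K k (Suc a) D j * (1 / p) ^ j) + (\<Sum>j\<le>B. real j * K k a (D + k) j * (1 / p) ^ j)"
      by (rule sum.distrib)
    also have "... = SS k p (Suc a) D + SS k p a (D + k)"
    proof -
      have k1: "k \<ge> 1" using k by simp
      have "SS k p (Suc a) D = (\<Sum>j\<le>B. real j * K k (Suc a) D j * (1 / p) ^ j)"
        unfolding B_def by (rule SS_ext[OF k1])
      moreover have "SS k p a (D + k) = (\<Sum>j\<le>B. real j * K k a (D + k) j * (1 / p) ^ j)"
        unfolding SS_def b ..
      ultimately show ?thesis by simp
    qed
    finally show ?thesis .
  qed
  have EE: "EE k p (Suc a) (Suc D) = p * EE k p (Suc a) D + q * EE k p a (D + k)"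
  proof -
    have e1: "(k - 1) * Suc a + Suc D = Suc ((k - 1) * Suc a + D)" by simp
    have e2: "(k - 1) * Suc a + Suc D = (k - 1) * a + (D + k)" by (simp add: k)
    have "EE k p (Suc a) (Suc D) = q ^ Suc a * p ^ ((k - 1) * Suc a + Suc D) * SS k p (Suc a) D
       + q ^ Suc a * p ^ ((k - 1) * Suc a + Suc D) * SS k p a (D + k)"
      unfolding EE_def S q_def[symmetric] by (simp add: algebra_simps)
    also have "... = q ^ Suc a * (p * p ^ ((k - 1) * Suc a + D)) * SS k p (Suc a) D
       + q ^ Suc a * p ^ ((k - 1) * a + (D + k)) * SS k p a (D + k)"
    proof -
      have pe1: "p * p ^ ((k - 1) * Suc a + D) = p ^ ((k - 1) * Suc a + Suc D)" by simp
      have pe2: "p ^ ((k - 1) * a + (D + k)) = p ^ ((k - 1) * Suc a + Suc D)" by (simp only: e2)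
      show ?thesis by (simp only: pe1 pe2)
    qed
    also have "... = p * EE k p (Suc a) D + q * EE k p a (D + k)"
      unfolding EE_def q_def[symmetric] by (simp add: algebra_simps)
    finally show ?thesis .
  qed
  show ?case using IH1 IH2 HH EE by (simp add: q_def algebra_simps)
qed



lemma mset_dec_first: "v \<in> set xs \<Longrightarrow> mset (dec_first v xs) = add_mset (v - 1) (mset xs - {#v#})"
  by (induction xs) (auto simp: add_mset_commute)

lemma finite_residue: "finite (set_pmf (residue_dist p xs))"
proof (induction p xs rule: residue_dist.induct)
  case (1 p xs)
  show ?case
    by (subst residue_dist.simps) (use 1 in \<open>auto simp: Let_def\<close>)
qed

lemma E_stop: "0 \<in> set xs \<Longrightarrow> measure_pmf.expectation (residue_dist p xs) real = real (sum_list xs)"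
  by (subst residue_dist.simps) simp

lemma E_step:
  assumes "xs \<noteq> []" "0 \<notin> set xs" "0 \<le> p" "p \<le> 1"
  shows "measure_pmf.expectation (residue_dist p xs) real =
     p * measure_pmf.expectation (residue_dist p (take_big xs)) real
     + (1 - p) * measure_pmf.expectation (residue_dist p (take_little xs)) real"
proof -
  have "measure_pmf.expectation (residue_dist p xs) real =
    measure_pmf.expectation (bernoulli_pmf p \<bind> (\<lambda>b. if b then residue_dist p (take_big xs) else residue_dist p (take_little xs))) real"
    using assms by (subst residue_dist.simps) (simp add: Let_def)
  also have "... = (\<Sum>b\<in>UNIV. pmf (bernoulli_pmf p) b *\<^sub>R measure_pmf.expectation (if b then residue_dist p (take_big xs) else residue_dist p (take_little xs)) real)"
    by (rule pmf_expectation_bind) (auto simp: finite_residue)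
  also have "... = p * measure_pmf.expectation (residue_dist p (take_big xs)) real
     + (1 - p) * measure_pmf.expectation (residue_dist p (take_little xs)) real"
    using assms by (simp add: UNIV_bool)
  finally show ?thesis .
qed


definition RR :: "nat \<Rightarrow> nat \<Rightarrow> nat \<Rightarrow> nat \<Rightarrow> nat multiset" where
  "RR k a b c = add_mset a (replicate_mset c (Suc b) + replicate_mset (k - 1 - c) b)"

lemma set_RR: "c < k - 1 \<Longrightarrow> set_mset (RR k a b c) = insert a (insert b (if c = 0 then {} else {Suc b}))"
  by (auto simp: RR_def)

lemma RR1: "a \<le> b \<Longrightarrow> Suc c0 < k - 1 \<Longrightarrow> add_mset b (RR k a b (Suc c0) - {#Suc b#}) = RR k a b c0"
  unfolding RR_def by (rule multiset_eqI) (simp add: Suc_diff_Suc)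

lemma RR2: "a < b \<Longrightarrow> K1 \<ge> 1 \<Longrightarrow> add_mset (b - Suc 0) (RR (Suc K1) a b 0 - {#b#}) = RR (Suc K1) a (b - Suc 0) (K1 - Suc 0)"
  unfolding RR_def by (rule multiset_eqI) simp

lemma RR3: "K1 \<ge> 1 \<Longrightarrow> add_mset a0 (RR (Suc K1) (Suc a0) (Suc a0) 0 - {#Suc a0#}) = RR (Suc K1) a0 (Suc a0) 0"
  unfolding RR_def by (rule multiset_eqI) simp

lemma RR4: "Suc a0 \<le> b \<Longrightarrow> add_mset a0 (RR k (Suc a0) b c - {#Suc a0#}) = RR k a0 b c"
  unfolding RR_def by (rule multiset_eqI) simp

lemma main_E:
  assumes k: "k = Suc K1" "K1 \<ge> 1" and p: "0 \<le> p" "p \<le> 1"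
  shows "mset xs = RR k a b c \<Longrightarrow> c < K1 \<Longrightarrow> a \<le> b \<Longrightarrow>
    measure_pmf.expectation (residue_dist p xs) real = fw k p a (K1 * (b - a) + c)"
proof (induction "sum_list xs" arbitrary: xs a b c rule: less_induct)
  case (less xs a b c)
  have sx: "set xs = set_mset (RR k a b c)" using less(2) by (metis set_mset_mset)
  have sx2: "set xs = insert a (insert b (if c = 0 then {} else {Suc b}))"
    using sx set_RR[of c k a b] less(3) k by simp
  show ?case
  proof (cases a)
    case 0
    have "0 \<in> set xs" using sx2 0 by simp
    moreover have "sum_list xs = K1 * b + c"
    proof -
      have "sum_list xs = sum_mset (mset xs)" by (simp add: sum_mset_sum_list)
      also have "... = c * Suc b + (K1 - c) * b" using less(2) 0 k by (simp add: RR_def)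
      also have "... = K1 * b + c" using less(3)
        by (simp add: algebra_simps)
      finally show ?thesis .
    qed
    ultimately show ?thesis using 0 by (simp add: E_stop)
  next
    case (Suc a0)
    have ne: "xs \<noteq> []" using sx2 by auto
    have nz: "0 \<notin> set xs" using sx2 Suc less(4) by auto
    have mn: "Min (set xs) = a" using sx2 less(4) by (auto intro!: Min_eqI)
    have mx: "Max (set xs) = (if c = 0 then b else Suc b)" using sx2 less(4) by (auto intro!: Max_eqI)
    have lit: "mset (take_little xs) = RR k a0 b c"
      unfolding take_little_def mn using sx2 less(2) Suc less(4)
      by (subst mset_dec_first) (simp_all add: RR4)
    have slit: "sum_list (take_little xs) < sum_list xs"
      unfolding take_little_def mn using sx2 Suc by (intro sum_list_dec_first) auto
    have Elit: "measure_pmf.expectation (residue_dist p (take_little xs)) real = fw k p a0 (K1 * (b - a0) + c)"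
      using less(1)[OF slit lit less(3)] less(4) Suc by simp
    have sbig: "sum_list (take_big xs) < sum_list xs"
      unfolding take_big_def mx using sx2 Suc less(4) by (intro sum_list_dec_first) auto
    have step: "measure_pmf.expectation (residue_dist p xs) real =
     p * measure_pmf.expectation (residue_dist p (take_big xs)) real
     + (1 - p) * fw k p a0 (K1 * (b - a0) + c)"
      using E_step[OF ne nz p] Elit by simp
    have "b - a0 = Suc (b - a)" using less(4) Suc by simp
    then have bl: "K1 * (b - a0) + c = K1 * (b - a) + c + K1" by simp
    consider (c1) c0 where "c = Suc c0" | (c2) "c = 0" "a < b" | (c3) "c = 0" "a = b"
      using less(4) by (cases c) (auto simp: le_less)
    then show ?thesis
    proof cases
      case c1
      have big: "mset (take_big xs) = RR k a b c0"
        unfolding take_big_def mx using sx2 less(2,3,4) Suc c1 k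
        by (subst mset_dec_first) (simp_all add: RR1)
      have Ebig: "measure_pmf.expectation (residue_dist p (take_big xs)) real = fw k p a (K1 * (b - a) + c0)"
        using less(1)[OF sbig big] less(3,4) c1 by simp
      show ?thesis unfolding step Ebig bl using Suc c1 k by simp
    next
      case c2
      have big: "mset (take_big xs) = RR k a (b - 1) (K1 - 1)"
        unfolding take_big_def mx using sx2 less(2,3,4) Suc c2 k
        by (subst mset_dec_first) (simp_all add: RR2)
      have Ebig: "measure_pmf.expectation (residue_dist p (take_big xs)) real = fw k p a (K1 * (b - 1 - a) + (K1 - 1))"
        using less(1)[OF sbig big] less(3,4) c2 k by simp
      obtain D0 where D0: "K1 * (b - a) = Suc D0" "K1 * (b - 1 - a) + (K1 - 1) = D0"
      proof -
        have "K1 * (b - a) = K1 * (b - 1 - a) + K1" using c2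
          by (metis Suc_diff_Suc diff_Suc_1 diff_commute mult_Suc_right add.commute zero_less_diff)
        then show ?thesis using that[of "K1 * (b - 1 - a) + (K1 - 1)"] k by simp
      qed
      show ?thesis unfolding step Ebig bl D0 using Suc c2 k by simp
    next
      case c3
      have big: "mset (take_big xs) = RR k a0 a 0"
        unfolding take_big_def mx using sx2 less(2,3,4) Suc c3 k
        by (subst mset_dec_first) (simp_all add: RR3)
      have Ebig: "measure_pmf.expectation (residue_dist p (take_big xs)) real = fw k p a0 K1"
      proof -
        have "K1 * (a - a0) = K1" using Suc by simp
        then show ?thesis using less(1)[OF sbig big] k Suc by simp
      qed
      show ?thesis unfolding step Ebig bl using Suc c3 k by (simp add: algebra_simps)
    qed
  qed
qed



lemma M_fw: assumes "k \<ge> 2" "0 \<le> p" "p \<le> 1" shows "M k n p = fw k p n 0"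
proof -
  obtain K1 where k: "k = Suc K1" "K1 \<ge> 1" using assms(1) by (cases k) auto
  have "mset (replicate k n) = RR k n n 0" unfolding RR_def using k by simp
  from main_E[OF k assms(2,3) this] k show ?thesis unfolding M_def by simp
qed

lemma ceil_le: assumes "c > 0" shows "nat \<lceil>real j / real c\<rceil> \<le> x \<longleftrightarrow> j \<le> c * x"
proof -
  have "nat \<lceil>real j / real c\<rceil> \<le> x \<longleftrightarrow> \<lceil>real j / real c\<rceil> \<le> int x" by (simp add: nat_le_iff)
  also have "... \<longleftrightarrow> real j / real c \<le> real x" by (simp add: ceiling_le_iff)
  also have "... \<longleftrightarrow> real j \<le> real c * real x" using assms by (simp add: divide_le_eq mult.commute)
  also have "... \<longleftrightarrow> j \<le> c * x" by (metis of_nat_le_iff of_nat_mult)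
  finally show ?thesis .
qed

lemma FF_s: assumes "k \<ge> 2" shows "FF k (k - 1) u = s k (Suc u)"
proof -
  have e: "k * Suc u - 1 = k - 1 + k * u" using assms by simp
  have r: "real k * real (Suc u) - 1 = real (k - 1 + k * u)" using assms by (simp add: of_nat_diff algebra_simps)
  have r2: "real (k - 1) = real k - 1" using assms by (simp add: of_nat_diff)
  show ?thesis unfolding FF_def s_def e r r2 using assms by simp
qed

lemma Kd:
  assumes k: "k \<ge> 2" and n: "n \<ge> 2" and j: "k \<le> j" "j \<le> (k - 1) * n"
  shows "K k (n - 1) (k - 1) j = d k n j"
proof -
  obtain k' where k': "k = Suc k'" "k' \<ge> 1" using k by (cases k) auto
  obtain m where m: "n = Suc m" "m \<ge> 1" using n by (cases n) auto
  define c where "c = nat \<lceil>real j / real (k - 1)\<rceil>"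
  have cpos: "k - 1 > 0" using k by simp
  have cle: "c \<le> x \<longleftrightarrow> j \<le> (k - 1) * x" for x unfolding c_def by (rule ceil_le[OF cpos])
  have cn: "c \<le> n" using cle j by simp
  have c1: "c \<ge> 1" using cle[of 0] j k by simp
  have dd: "d k n j = real ((k * n - 2 - j) choose (n - 2))
      - (\<Sum>l = 1..n - c. s k l * real ((k * (n - l) - 1 - j) choose (n - l - 1)))"
    unfolding d_def c_def using j by simp
  have C1: "CC k (n - 1) (k - 1) j = real ((k * n - 2 - j) choose (n - 2))"
  proof -
    have "j \<le> (k - 1) * (n - 1) + (k - 1)" using j m by (simp add: algebra_simps)
    moreover have "k * (n - 1) + (k - 1) - j - 1 = k * n - 2 - j"
      using m k' by (simp add: algebra_simps)
    ultimately show ?thesis unfolding CC_def using m by simp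
  qed
  define g where "g u = FF k (k - 1) u * CC k (n - 1 - u) 0 j" for u
  have g0: "g u = 0" if "u < n - 1" "\<not> Suc u \<le> n - c" for u
  proof -
    have "\<not> c \<le> n - 1 - u" using that cn by arith
    then have "\<not> j \<le> (k - 1) * (n - 1 - u)" using cle[of "n - 1 - u"] by simp
    then show ?thesis unfolding g_def CC_def using that by simp
  qed
  have g1: "g (l - 1) = s k l * real ((k * (n - l) - 1 - j) choose (n - l - 1))"
    if "1 \<le> l" "l \<le> n - c" for l
  proof -
    have "c \<le> n - l" using that cn by arith
    then have "j \<le> (k - 1) * (n - l)" using cle[of "n - l"] by simp
    moreover have "n - 1 - (l - 1) = n - l" using that by simp
    moreover have "n - l \<noteq> 0" using that c1 by simp
    moreover have "k * (n - l) - j - 1 = k * (n - l) - 1 - j" by simp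
    ultimately show ?thesis unfolding g_def CC_def using FF_s[OF k, of "l - 1"] that by simp
  qed
  have "(\<Sum>u<n - 1. g u) = (\<Sum>u<n - c. g u)"
  proof (rule sum.mono_neutral_right)
    show "{..<n - c} \<subseteq> {..<n - 1}" using c1 by auto
  qed (use g0 in auto)
  also have "... = (\<Sum>l = 1..n - c. g (l - 1))"
  proof -
    have "(\<Sum>l = 1..n - c. g (l - 1)) = (\<Sum>l \<in> Suc ` {..<n - c}. g (l - 1))"
    proof -
      have "{1..n - c} = Suc ` {..<n - c}"
        by (auto simp: image_iff) (metis Suc_pred' le_simps(3) lessThan_iff not_less_eq_eq zero_less_iff_neq_zero le_zero_eq)
      then show ?thesis by simp
    qed
    also have "... = (\<Sum>u<n - c. g u)" by (subst sum.reindex) auto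
    finally show ?thesis by simp
  qed
  also have "... = (\<Sum>l = 1..n - c. s k l * real ((k * (n - l) - 1 - j) choose (n - l - 1)))"
    by (intro sum.cong refl g1) auto
  finally have S: "(\<Sum>u<n - 1. g u) = (\<Sum>l = 1..n - c. s k l * real ((k * (n - l) - 1 - j) choose (n - l - 1)))" .
  have "K k (n - 1) (k - 1) j = CC k (n - 1) (k - 1) j - (\<Sum>u<n - 1. g u)"
    unfolding g_def using K_decomp[OF k'(1)] by simp
  then show ?thesis unfolding dd C1 S .
qed


lemma set_aux: "{0<..<Suc m} = Suc ` {..<m}"
  by (auto simp: image_iff gr0_conv_Suc)

lemma pow_aux1: "(p ^ k' * (q::real)) ^ Suc u = q * (p ^ (k' + k' * u) * q ^ u)"
  by (simp add: power_mult_distrib power_mult[symmetric] power_add mult_ac)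

lemma pow_aux2: "q \<noteq> 0 \<Longrightarrow> ((p::real) ^ k' * q) ^ Suc m * (1 / q) = q ^ m * p ^ (k' * m + k')"
  by (simp add: power_mult_distrib power_mult[symmetric] power_add mult_ac)

theorem lemma3p1:
  fixes k :: nat and p :: real
  assumes "k \<ge> 2" and "0 < p" and "p < 1"
  shows "M k 1 p = real k - 1 \<and>
    (\<forall>n\<ge>2. M k n p =
       (1 / (1 - p)) * (\<Sum>i\<in>{0<..<n}. s k i * (p ^ (k - 1) * (1 - p)) ^ i * M k (n - i) p)
       + L k n p)"
proof
  have p01: "0 \<le> p" "p \<le> 1" using assms by simp_all
  obtain k' where k': "k = Suc k'" "k' \<ge> 1" using assms(1) by (cases k) auto
  show "M k 1 p = real k - 1" using M_fw[OF assms(1) p01, of 1] k' by simp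
  show "\<forall>n\<ge>2. M k n p =
       (1 / (1 - p)) * (\<Sum>i\<in>{0<..<n}. s k i * (p ^ (k - 1) * (1 - p)) ^ i * M k (n - i) p)
       + L k n p"
  proof (intro allI impI)
    fix n :: nat assume n: "n \<ge> 2"
    define q where "q = 1 - p"
    have q0: "q \<noteq> 0" "q > 0" using assms by (simp_all add: q_def)
    have p0: "p \<noteq> 0" using assms by simp
    obtain m where m: "n = Suc m" "m \<ge> 1" using n by (cases n) auto
    have "M k n p = fw k p m k'" using M_fw[OF assms(1) p01, of n] m k' by simp
    also have "... = HH k p m k' + EE k p m k'" by (rule lemmaA[OF k'(1) p0])
    finally have M1: "M k n p = HH k p m k' + EE k p m k'" .
    have H: "HH k p m k' = (1 / q) * (\<Sum>i\<in>{0<..<n}. s k i * (p ^ (k - 1) * q) ^ i * M k (n - i) p)"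
    proof -
      have "{0<..<n} = Suc ` {..<m}" using m set_aux by simp
      then have "(\<Sum>i\<in>{0<..<n}. s k i * (p ^ (k - 1) * q) ^ i * M k (n - i) p)
          = (\<Sum>u<m. s k (Suc u) * (p ^ (k - 1) * q) ^ Suc u * M k (n - Suc u) p)"
        by (simp add: sum.reindex)
      also have "... = (\<Sum>u<m. q * (FF k k' u * p ^ (k' + k' * u) * q ^ u * fw k p (m - u) 0))"
      proof (rule sum.cong[OF refl])
        fix u assume "u \<in> {..<m}"
        have e1: "M k (n - Suc u) p = fw k p (m - u) 0" using M_fw[OF assms(1) p01] m by simp
        have e2: "s k (Suc u) = FF k k' u" using FF_s[OF assms(1), of u] k' by simp
        have e3: "(p ^ (k - 1) * q) ^ Suc u = q * (p ^ (k' + k' * u) * q ^ u)"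
          using k' pow_aux1 by simp
        show "s k (Suc u) * (p ^ (k - 1) * q) ^ Suc u * M k (n - Suc u) p
            = q * (FF k k' u * p ^ (k' + k' * u) * q ^ u * fw k p (m - u) 0)"
          unfolding e1 e2 e3 by (simp add: mult_ac)
      qed
      also have "... = q * HH k p m k'" unfolding HH_def q_def[symmetric] using k'
        by (simp add: sum_distrib_left)
      finally show ?thesis using q0 by simp
    qed
    have E: "EE k p m k' = L k n p"
    proof -
      have B: "(k - 1) * m + k' = (k - 1) * n" using k' m by simp
      have "SS k p m k' = (\<Sum>j = k..(k - 1) * n. real j * d k n j * (1 / p) ^ j)"
      proof -
        have "SS k p m k' = (\<Sum>j = k..(k - 1) * n. real j * K k m k' j * (1 / p) ^ j)"
          unfolding SS_def B
        proof (rule sum.mono_neutral_right)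
          show "\<forall>i\<in>{..(k - 1) * n} - {k..(k - 1) * n}. real i * K k m k' i * (1 / p) ^ i = 0"
            using K_small[of m _ k k'] m by auto
        qed auto
        also have "... = (\<Sum>j = k..(k - 1) * n. real j * d k n j * (1 / p) ^ j)"
        proof (rule sum.cong[OF refl])
          fix j assume "j \<in> {k..(k - 1) * n}"
          then show "real j * K k m k' j * (1 / p) ^ j = real j * d k n j * (1 / p) ^ j"
            using Kd[OF assms(1) n, of j] m k' by simp
        qed
        finally show ?thesis .
      qed
      moreover have "(p ^ (k - 1) * (1 - p)) ^ n * (1 / (1 - p)) = (1 - p) ^ m * p ^ ((k - 1) * m + k')"
        using m k' q0 pow_aux2[of q p k' m] unfolding q_def[symmetric] by (simp add: mult.commute)
      ultimately show ?thesis unfolding EE_def L_def by simp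
    qed
    show "M k n p = (1 / (1 - p)) * (\<Sum>i\<in>{0<..<n}. s k i * (p ^ (k - 1) * (1 - p)) ^ i * M k (n - i) p)
       + L k n p" using M1 H E unfolding q_def by simp
  qed
qed


end
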